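(* Let $m\ge1$ and $l\ge1$ be integers and let $j\in\{1,\dots,m\}$. Then there exists a positive integer \[ D_{m,l}=\prod_{\substack{p\le \frac{m+1}{2}\\ p\text{ prime}}}p^{\nu_p},\qquad \nu_p\ge\left(\left\lfloor\frac jp\right\rfloor+\left\lfloor\frac{m-j}{p}\right\rfloor\right)v_p((l-1)!), \] such that $D_{m,l}^{-1}B^*_{k,j}(t)\in\mathbb{Z}[t]$ for all $k=0,1,\dots,m$.
   Context: $v_p$ is the $p$-adic valuation. For $k=0,\dots,m$ let $l^{(k)}_h=l$ for $h\ne k$ and $l^{(k)}_k=l-1$ ($h=0,\dots,m$), and $L=(m+1)l-1$. For $j,k\in\{0,\dots,m\}$ define $\sigma^{(k,j)}_i$ by $\prod_{h=0}^m(h-j-w)^{l^{(k)}_h}=\sum_{i=0}^L\sigma^{(k,j)}_iw^i$, and $B^*_{k,j}(t)=\frac{1}{(l-1)!}\sum_{i=0}^{L}t^{L-i}\,i!\,\sigma^{(k,j)}_i$. *)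

theory Defs
  imports "HOL-Computational_Algebra.Computational_Algebra"
begin

definition lexp :: "nat \<Rightarrow> nat \<Rightarrow> nat \<Rightarrow> nat" where
  "lexp l k h = (if h = k then l - 1 else l)"

definition bigL :: "nat \<Rightarrow> nat \<Rightarrow> nat" where
  "bigL m l = (m + 1) * l - 1"

definition sigma_poly :: "nat \<Rightarrow> nat \<Rightarrow> nat \<Rightarrow> nat \<Rightarrow> int poly" where
  "sigma_poly m l k j = (\<Prod>h\<in>{0..m}. [:int h - int j, -1:] ^ lexp l k h)"

definition sigma :: "nat \<Rightarrow> nat \<Rightarrow> nat \<Rightarrow> nat \<Rightarrow> nat \<Rightarrow> int" where
  "sigma m l k j i = coeff (sigma_poly m l k j) i"

definition Bstar :: "nat \<Rightarrow> nat \<Rightarrow> nat \<Rightarrow> nat \<Rightarrow> rat poly" where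
  "Bstar m l k j = smult (1 / fact (l - 1))
     (\<Sum>i\<in>{0..bigL m l}. monom (fact i * of_int (sigma m l k j i)) (bigL m l - i))"

end

theory Submission
  imports Defs
begin

lemma mfs:
  fixes p :: nat assumes p: "prime p"
  shows "multiplicity p (fact (Suc n) :: nat) = multiplicity p (Suc n) + multiplicity p (fact n :: nat)"
proof -
  have "(fact (Suc n)::nat) = Suc n * fact n" by (metis fact_Suc of_nat_id)
  then show ?thesis using prime_elem_multiplicity_mult_distrib[of p "Suc n" "fact n"] p
    by (simp del: fact_Suc)
qed

lemma mult_fact_step:
  fixes p :: nat assumes p: "prime p"
  shows "multiplicity p (fact n :: nat) = n div p + multiplicity p (fact (n div p) :: nat)"
proof (induction n)
  case 0 then show ?case by simp
next
  case (Suc n)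
  have p0: "p \<noteq> 0" and p1: "p > 1" using p prime_gt_1_nat by auto
  have "multiplicity p (fact (Suc n) :: nat) = multiplicity p (Suc n) + multiplicity p (fact n :: nat)"
    by (rule mfs[OF p])
  show ?case
  proof (cases "p dvd Suc n")
    case False
    then have "Suc n div p = n div p"
      by (metis div_Suc dvd_eq_mod_eq_0 mod_Suc p1 less_not_refl)  
    then show ?thesis using False Suc mfs[OF p, of n]
      by (simp add: not_dvd_imp_multiplicity_0 del: fact_Suc)
  next
    case True
    then obtain q where q: "Suc n = p * Suc q"
      by (metis dvd_def mult_0_right nat.distinct(1) not0_implies_Suc)
    have d1: "Suc n div p = Suc q" using q p0 by simp
    have d2: "n div p = q"
    proof -
      have "n = p * q + (p - 1)" using q p1 by (simp add: algebra_simps)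
      then show ?thesis using p1
        by (intro div_nat_eqI) (auto simp: algebra_simps)
    qed
    have "multiplicity p (Suc n) = Suc (multiplicity p (Suc q))"
      unfolding q using p0 p1 multiplicity_times_same[of "Suc q" p] by auto
    moreover have "multiplicity p (fact (Suc q) :: nat) = multiplicity p (Suc q) + multiplicity p (fact q :: nat)"
      by (rule mfs[OF p])
    ultimately show ?thesis using Suc d1 d2 mfs[OF p, of n]
      by (simp del: fact_Suc)
  qed
qed

lemma mult_fact_le:
  fixes p :: nat assumes p: "prime p"
  shows "multiplicity p (fact n :: nat) \<le> n"
proof (induction n rule: less_induct)
  case (less n)
  show ?case
  proof (cases "n = 0")
    case True then show ?thesis by simp
  next
    case False
    have p1: "p > 1" using p prime_gt_1_nat by auto
    have lt: "n div p < n" using False p1 by simp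
    have "n div p + n div p \<le> n"
    proof -
      have "n div p * 2 \<le> n div p * p" using p1 by simp
      also have "\<dots> \<le> n" by (rule div_times_less_eq_dividend)
      finally show ?thesis by simp
    qed
    then show ?thesis using mult_fact_step[OF p, of n] less[OF lt] by linarith
  qed
qed

definition bt :: "int poly \<Rightarrow> int \<Rightarrow> bool" where
  "bt F c \<longleftrightarrow> (\<forall>i. c dvd fact i * coeff F i)"

lemma bt_mult:
  assumes "bt F a" "bt G b" shows "bt (F * G) (a * b)"
  unfolding bt_def
proof
  fix i
  have "fact i * coeff (F * G) i = (\<Sum>u\<le>i. fact i * (coeff F u * coeff G (i - u)))"
    by (simp add: coeff_mult sum_distrib_left)
  also have "\<dots> = (\<Sum>u\<le>i. of_nat (i choose u) * ((fact u * coeff F u) * (fact (i - u) * coeff G (i - u))))"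
  proof (rule sum.cong[OF refl])
    fix u assume "u \<in> {..i}"
    then have "(fact i :: int) = of_nat (fact u * fact (i - u) * (i choose u))"
      using binomial_fact_lemma[of u i] by (metis atMost_iff of_nat_fact)
    then show "fact i * (coeff F u * coeff G (i - u)) = of_nat (i choose u) * ((fact u * coeff F u) * (fact (i - u) * coeff G (i - u)))"
      by (simp add: algebra_simps)
  qed
  also have "a * b dvd \<dots>"
  proof (rule dvd_sum)
    fix u
    have "a * b dvd (fact u * coeff F u) * (fact (i - u) * coeff G (i - u))"
      using assms unfolding bt_def by (intro mult_dvd_mono) auto
    then show "a * b dvd of_nat (i choose u) * ((fact u * coeff F u) * (fact (i - u) * coeff G (i - u)))"
      by (rule dvd_mult)
  qed
  finally show "a * b dvd fact i * coeff (F * G) i" .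
qed

lemma bt_1: "bt F 1" by (simp add: bt_def)

lemma bt_weaken: "bt F a \<Longrightarrow> c dvd a \<Longrightarrow> bt F c"
  unfolding bt_def using dvd_trans by blast

lemma bt_prod:
  assumes "finite A" "\<And>h. h \<in> A \<Longrightarrow> bt (F h) (c h)"
  shows "bt (\<Prod>h\<in>A. F h) (\<Prod>h\<in>A. c h)"
  using assms
proof (induction A rule: finite_induct)
  case empty
  then show ?case by (simp add: bt_def)
next
  case (insert x A)
  then show ?case by (simp add: bt_mult)
qed

lemma coeff_lin_pow_high:
  assumes "a < i" shows "coeff ([:c, -1:] ^ a :: int poly) i = 0"
proof (rule coeff_eq_0)
  have "degree ([:c, -1:] ^ a :: int poly) \<le> degree [:c, -1:: int:] * a" by (rule degree_power_le)
  then show "degree ([:c, -1:] ^ a :: int poly) < i" using assms by simp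
qed

lemma bt_X: "bt ([:0, -1:] ^ a) (fact a)"
  unfolding bt_def
proof
  fix i
  show "fact a dvd fact i * coeff ([:0, -1:] ^ a :: int poly) i"
  proof (cases "i \<le> a")
    case True
    then show ?thesis by (cases "i = a") (simp_all add: coeff_linear_poly_power power_0_left)
  next
    case False
    then have "coeff ([:0, -1:] ^ a :: int poly) i = 0"
      using coeff_lin_pow_high[of a i 0] by simp
    then show ?thesis by simp
  qed
qed

lemma pdiv_aux:
  fixes p :: nat assumes p: "prime p" and ia: "i \<le> a"
  shows "p ^ multiplicity p (fact a :: nat) dvd fact i * (a choose i) * p ^ (a - i)"
proof -
  define X where "X = fact i * (a choose i) * p ^ (a - i)"
  have p0: "p \<noteq> 0" using p by auto
  have eq: "X * fact (a - i) = fact a * p ^ (a - i)"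
    unfolding X_def using binomial_fact_lemma[OF ia] by (simp add: algebra_simps)
  have X0: "X \<noteq> 0" unfolding X_def using p0 ia by simp
  have "multiplicity p (X * fact (a - i)) = multiplicity p X + multiplicity p (fact (a - i) :: nat)"
    using X0 p by (simp add: prime_elem_multiplicity_mult_distrib del: fact_Suc)
  moreover have "multiplicity p (fact a * p ^ (a - i)) = multiplicity p (fact a :: nat) + (a - i)"
    using p p0 by (simp add: prime_elem_multiplicity_mult_distrib del: fact_Suc)
  moreover have "multiplicity p (fact (a - i) :: nat) \<le> a - i" by (rule mult_fact_le[OF p])
  ultimately have "multiplicity p (fact a :: nat) \<le> multiplicity p X" using eq by simp
  then show ?thesis unfolding X_def[symmetric] by (rule multiplicity_dvd')
qed

lemma bt_shift:
  fixes p :: nat and s :: int assumes p: "prime p"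
  shows "bt ([:int p * s, -1:] ^ a) (int p ^ multiplicity p (fact a :: nat))"
  unfolding bt_def
proof
  fix i
  show "int p ^ multiplicity p (fact a :: nat) dvd fact i * coeff ([:int p * s, -1:] ^ a) i"
  proof (cases "i \<le> a")
    case True
    have "int (p ^ multiplicity p (fact a :: nat)) dvd int (fact i * (a choose i) * p ^ (a - i))"
      using pdiv_aux[OF p True] by (simp only: of_nat_dvd_iff)
    then have "int p ^ multiplicity p (fact a :: nat) dvd fact i * int (a choose i) * int p ^ (a - i)"
      by simp
    then have "int p ^ multiplicity p (fact a :: nat) dvd (fact i * int (a choose i) * int p ^ (a - i)) * ((-1) ^ i * s ^ (a - i))"
      by (rule dvd_mult2)
    then show ?thesis using True
      by (simp add: coeff_linear_poly_power power_mult_distrib algebra_simps)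
  next
    case False
    then show ?thesis using coeff_lin_pow_high[of a i] by simp
  qed
qed

lemma bt_pow_ge:
  assumes "bt ([:c, -1:] ^ b) x" "b \<le> e" shows "bt ([:c, -1:] ^ e) x"
proof -
  have "[:c, -1:] ^ e = [:c, -1:] ^ b * [:c, -1:] ^ (e - b)"
    using assms(2) by (simp add: power_add[symmetric])
  moreover have "bt ([:c, -1:] ^ b * [:c, -1:] ^ (e - b)) (x * 1)"
    by (rule bt_mult[OF assms(1) bt_1])
  ultimately show ?thesis by simp
qed

lemma lexp_ge: "l - 1 \<le> lexp l k h" by (simp add: lexp_def)

lemma bt_sigma:
  fixes p :: nat
  assumes p: "prime p" and j: "j \<in> {1..m}"
  shows "bt (sigma_poly m l k j) (fact (l - 1) * (int p ^ multiplicity p (fact (l - 1) :: nat)) ^ (j div p + (m - j) div p))"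
proof -
  define f where "f h = ([:int h - int j, -1:] ^ lexp l k h :: int poly)" for h
  define S1 where "S1 = (\<lambda>t. j - p * t) ` {1..j div p}"
  define S2 where "S2 = (\<lambda>t. j + p * t) ` {1..(m - j) div p}"
  define S where "S = S1 \<union> S2"
  define R where "R = {0..m} - insert j S"
  define v where "v = int p ^ multiplicity p (fact (l - 1) :: nat)"
  have p1: "p > 1" using p prime_gt_1_nat by auto
  have S1sub: "S1 \<subseteq> {0..m} - {j}"
  proof
    fix h assume "h \<in> S1"
    then obtain t where t: "t \<in> {1..j div p}" "h = j - p * t" unfolding S1_def by auto
    have "p * t \<le> p * (j div p)" using t by simp
    also have "\<dots> \<le> j" by simp
    finally have "p * t \<le> j" .
    moreover have "p * t > 0" using t p1 by auto
    ultimately have "h < j" using t by linarith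
    then show "h \<in> {0..m} - {j}" using j by auto
  qed
  have S2sub: "S2 \<subseteq> {0..m} - {j}"
  proof
    fix h assume "h \<in> S2"
    then obtain t where t: "t \<in> {1..(m - j) div p}" "h = j + p * t" unfolding S2_def by auto
    have "p * t \<le> p * ((m - j) div p)" using t by simp
    also have "\<dots> \<le> m - j" by simp
    finally have "p * t \<le> m - j" .
    moreover have "p * t > 0" using t p1 by auto
    ultimately show "h \<in> {0..m} - {j}" using t j by auto
  qed
  have card1: "card S1 = j div p"
    unfolding S1_def
  proof (subst card_image)
    show "inj_on (\<lambda>t. j - p * t) {1..j div p}"
    proof (rule inj_onI)
      fix x y assume "x \<in> {1..j div p}" "y \<in> {1..j div p}" "j - p * x = j - p * y"
      moreover have "p * x \<le> j" "p * y \<le> j"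
        using \<open>x \<in> _\<close> \<open>y \<in> _\<close> by (metis atLeastAtMost_iff dual_order.trans mult_le_mono2 times_div_less_eq_dividend)+
      ultimately have "p * x = p * y" by linarith
      then show "x = y" using p1 by simp
    qed
  qed simp
  have card2: "card S2 = (m - j) div p"
    unfolding S2_def
    by (subst card_image) (auto intro!: inj_onI simp: p1)
  have disj: "S1 \<inter> S2 = {}"
  proof -
    have "a \<le> j" if "a \<in> S1" for a using that unfolding S1_def by auto
    moreover have "a > j" if "a \<in> S2" for a using that p1 unfolding S2_def by auto
    ultimately show ?thesis by fastforce
  qed
  have finS: "finite S" unfolding S_def S1_def S2_def by simp
  have cardS: "card S = j div p + (m - j) div p"
    unfolding S_def using disj card1 card2 by (simp add: card_Un_disjoint S1_def S2_def)
  have Ssub: "S \<subseteq> {0..m} - {j}" using S1sub S2sub S_def by auto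
  have decomp: "{0..m} = insert j (S \<union> R)" using Ssub j unfolding R_def by auto
  have jnot: "j \<notin> S \<union> R" using Ssub unfolding R_def by auto
  have SR: "S \<inter> R = {}" unfolding R_def by auto
  have finR: "finite R" unfolding R_def by simp
  have "sigma_poly m l k j = (\<Prod>h\<in>{0..m}. f h)" unfolding sigma_poly_def f_def by simp
  also have "\<dots> = f j * ((\<Prod>h\<in>S. f h) * (\<Prod>h\<in>R. f h))"
    unfolding decomp using jnot finS finR SR by (simp add: prod.union_disjoint)
  finally have eq: "sigma_poly m l k j = f j * ((\<Prod>h\<in>S. f h) * (\<Prod>h\<in>R. f h))" .
  have bj: "bt (f j) (fact (l - 1))"
    unfolding f_def using bt_pow_ge[OF bt_X lexp_ge] by simp
  have bS: "bt (\<Prod>h\<in>S. f h) (\<Prod>h\<in>S. v)"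
  proof (rule bt_prod[OF finS])
    fix h assume h: "h \<in> S"
    obtain s where s: "int h - int j = int p * s"
    proof (cases "h \<in> S1")
      case True
      then obtain t where t: "t \<in> {1..j div p}" "h = j - p * t" unfolding S1_def by auto
      have "p * t \<le> j" using t by (metis atLeastAtMost_iff dual_order.trans mult_le_mono2 times_div_less_eq_dividend)
      then have "int h - int j = int p * (- int t)" using t by (simp add: of_nat_diff)
      then show ?thesis using that by blast
    next
      case False
      then have "h \<in> S2" using h S_def by auto
      then obtain t where t: "h = j + p * t" unfolding S2_def by auto
      then have "int h - int j = int p * int t" by simp
      then show ?thesis using that by blast
    qed
    show "bt (f h) v"
      unfolding f_def v_def s using bt_pow_ge[OF bt_shift[OF p] lexp_ge] by simp
  qed
  have bR: "bt (\<Prod>h\<in>R. f h) 1" by (rule bt_1)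
  have "bt (f j * ((\<Prod>h\<in>S. f h) * (\<Prod>h\<in>R. f h))) (fact (l - 1) * ((\<Prod>h\<in>S. v) * 1))"
    by (intro bt_mult bj bS bR)
  then show ?thesis using eq cardS finS by (simp add: v_def)
qed

lemma combine_dvd:
  fixes A x :: int and f :: "nat \<Rightarrow> int"
  assumes "finite P" "A dvd x" "\<And>p. p \<in> P \<Longrightarrow> A * f p dvd x"
    "\<And>p q. p \<in> P \<Longrightarrow> q \<in> P \<Longrightarrow> p \<noteq> q \<Longrightarrow> coprime (f p) (f q)"
  shows "A * (\<Prod>p\<in>P. f p) dvd x"
  using assms
proof (induction P rule: finite_induct)
  case empty
  show ?case using empty by simp
next
  case (insert q P)
  have h1: "A * f q dvd x" using insert by auto
  have h2: "A * (\<Prod>p\<in>P. f p) dvd x" using insert by auto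
  have cop: "coprime (f q) (\<Prod>p\<in>P. f p)"
    using insert by (intro prod_coprime_right) auto
  have "lcm (A * f q) (A * (\<Prod>p\<in>P. f p)) dvd x" using h1 h2 by (rule lcm_least)
  then have "normalize (A * normalize (f q * (\<Prod>p\<in>P. f p))) dvd x"
    by (simp only: lcm_mult_left lcm_coprime[OF cop])
  then have "A * \<bar>f q * (\<Prod>p\<in>P. f p)\<bar> dvd x" by simp
  moreover have "A * (f q * (\<Prod>p\<in>P. f p)) dvd A * \<bar>f q * (\<Prod>p\<in>P. f p)\<bar>"
    by (intro mult_dvd_mono) auto
  ultimately have "A * (f q * (\<Prod>p\<in>P. f p)) dvd x" by (rule dvd_trans[rotated])
  then show ?case using insert by simp
qed

lemma bt_sigma_all:
  fixes P :: "nat set"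
  assumes fin: "finite P" and pr: "\<And>p. p \<in> P \<Longrightarrow> prime p" and j: "j \<in> {1..m}"
  shows "int (fact (l - 1) * (\<Prod>p\<in>P. p ^ ((j div p + (m - j) div p) * multiplicity p (fact (l - 1) :: nat))))
           dvd fact i * sigma m l k j i"
proof -
  define g where "g p = int p ^ ((j div p + (m - j) div p) * multiplicity p (fact (l - 1) :: nat))" for p
  have "fact (l - 1) * (\<Prod>p\<in>P. g p) dvd fact i * sigma m l k j i"
  proof (rule combine_dvd[OF fin])
    have "bt (sigma_poly m l k j) (fact (l - 1) * (int 2 ^ multiplicity 2 (fact (l - 1) :: nat)) ^ (j div 2 + (m - j) div 2))"
      using bt_sigma[OF two_is_prime_nat j] by blast
    then show "fact (l - 1) dvd fact i * sigma m l k j i"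
      unfolding bt_def sigma_def by (meson dvd_mult_left)
  next
    fix p assume "p \<in> P"
    then have "bt (sigma_poly m l k j) (fact (l - 1) * (int p ^ multiplicity p (fact (l - 1) :: nat)) ^ (j div p + (m - j) div p))"
      using bt_sigma[OF pr j] by blast
    then show "fact (l - 1) * g p dvd fact i * sigma m l k j i"
      unfolding bt_def sigma_def g_def by (simp add: power_mult[symmetric] mult.commute)
  next
    fix p q assume "p \<in> P" "q \<in> P" "p \<noteq> q"
    then have "coprime p q" using pr primes_coprime by blast
    then have "coprime (int p) (int q)" by simp
    then show "coprime (g p) (g q)" unfolding g_def by simp
  qed
  then show ?thesis unfolding g_def by simp
qed

lemma coeff_Bstar:
  "coeff (Bstar m l k j) n = (if n \<le> bigL m l then of_int (fact (bigL m l - n) * sigma m l k j (bigL m l - n)) / fact (l - 1) else 0)"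
proof -
  define L where "L = bigL m l"
  have "coeff (Bstar m l k j) n = (1 / fact (l - 1)) * (\<Sum>i\<in>{0..L}. if L - i = n then fact i * of_int (sigma m l k j i) else 0)"
    unfolding Bstar_def L_def by (simp add: coeff_sum coeff_monom)
  also have "(\<Sum>i\<in>{0..L}. if L - i = n then fact i * of_int (sigma m l k j i) else (0::rat))
     = (\<Sum>i\<in>{i\<in>{0..L}. L - i = n}. fact i * of_int (sigma m l k j i))"
    by (rule sum.inter_filter[symmetric]) simp
  also have "{i\<in>{0..L}. L - i = n} = (if n \<le> L then {L - n} else {})" by auto
  finally show ?thesis unfolding L_def[symmetric] by (auto simp: of_int_mult)
qed

theorem theorem6p2:
  fixes m l j :: nat
  assumes "m \<ge> 1" and "l \<ge> 1" and "j \<in> {1..m}"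
  shows "\<exists>(D::nat) (\<nu>::nat \<Rightarrow> nat).
           D > 0 \<and>
           D = (\<Prod>p\<in>{p. prime p \<and> real p \<le> real (m + 1) / 2}. p ^ \<nu> p) \<and>
           (\<forall>p. prime p \<and> real p \<le> real (m + 1) / 2 \<longrightarrow>
               \<nu> p \<ge> (j div p + (m - j) div p) * multiplicity p (fact (l - 1) :: nat)) \<and>
           (\<forall>k\<in>{0..m}. \<forall>n. coeff (Bstar m l k j) n / of_nat D \<in> \<int>)"
proof -
  define P where "P = {p. prime p \<and> real p \<le> real (m + 1) / 2}"
  define \<nu> where "\<nu> p = (j div p + (m - j) div p) * multiplicity p (fact (l - 1) :: nat)" for p
  define D where "D = (\<Prod>p\<in>P. p ^ \<nu> p)"
  have finP: "finite P"
  proof (rule finite_subset)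
    show "P \<subseteq> {..m + 1}" unfolding P_def by auto
  qed simp
  have prP: "\<And>p. p \<in> P \<Longrightarrow> prime p" unfolding P_def by auto
  have Dpos: "D > 0" unfolding D_def using prP prime_gt_0_nat
    by (intro prod_pos) auto
  have main: "coeff (Bstar m l k j) n / of_nat D \<in> \<int>" for k n
  proof (cases "n \<le> bigL m l")
    case False then show ?thesis by (simp add: coeff_Bstar)
  next
    case True
    define i where "i = bigL m l - n"
    have "int (fact (l - 1) * D) dvd fact i * sigma m l k j i"
      using bt_sigma_all[OF finP prP assms(3), of l i k] unfolding D_def \<nu>_def by blast
    then obtain c where c: "fact i * sigma m l k j i = int (fact (l - 1) * D) * c" by (elim dvdE)
    have "coeff (Bstar m l k j) n / of_nat D = of_int (fact i * sigma m l k j i) / fact (l - 1) / of_nat D"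
      using True by (simp add: coeff_Bstar i_def)
    also have "\<dots> = of_int c" unfolding c using Dpos by (simp add: field_simps)
    finally show ?thesis by simp
  qed
  show ?thesis
    by (rule exI[of _ D], rule exI[of _ \<nu>]) (use Dpos main in \<open>auto simp: D_def P_def \<nu>_def\<close>)
qed

end
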